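(* Let $V\in\mathcal{R}$ be built from $v\in\mathcal{F}$, and let $(v_n)$ be any generating sequence of $V$ starting from $v_0=v$ (i.e. $v_{n+1}$ built from $v_n$ and $V$ extends every $v_n$). Then $L(v_n,v)=\dfrac{\rho_{v_n}-\rho_v}{1+\rho_{v_n}}$ for every $n\ge1$, the limit $L(V,v)=\lim_n L(v_n,v)$ exists and does not depend on the choice of $(v_n)$, and $$L(V,v)=\frac{\rho_V-\rho_v}{1+\rho_V}=1-\frac{1+\rho_v}{1+\rho_V}$$ when $V\in\mathcal{R}^*$, while $L(V,v)=1$ when $V\notin\mathcal{R}^*$. Moreover, if $V\in\mathcal{R}^*$ then $0<L(V,v)<1$, and for any generating sequence $(u_n)$ of $V$ the sequence $L(V,u_n)$ is nonincreasing with limit $0$.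
   Context: $\mathcal F$ = finite $\{0,1\}$-words starting and ending with $0$; $Y,Z$ count $1$s and $0$s, $\rho_\alpha=Y(\alpha)/Z(\alpha)$. $u$ built from $v$: $u=v1^{a_1}v\cdots v1^{a_{q-1}}v$ ($q\ge2$, $a_i\ge0$). Generating sequence (in general, starting from $v_0=0$): $v_{n+1}$ built from $v_n$. $\mathcal R$: aperiodic $V\in\{0,1\}^{\mathbb N}$ extending all $v_n$ of some generating sequence. $V$ built from $v$: $V=v1^{a_1}v1^{a_2}v\cdots$ with $a_i\ge0$. For $V\in\mathcal R$, $\rho_V=\lim_n\rho_{v_n}\in[0,\infty]$ for any generating sequence $(v_n)$ of $V$ (this limit is independent of the sequence), and $\mathcal R^*=\{V\in\mathcal R:\rho_V<\infty\}$. For $\alpha,\beta\in\mathcal F$ with $\alpha=\beta1^{a_1}\beta\cdots\beta1^{a_{q-1}}\beta$, $L(\alpha,\beta)=\frac{1}{\mathrm{lh}(\alpha)}\sum_{j=1}^{q-1}a_j$. *)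

theory Defs
  imports "HOL-Analysis.Analysis"
begin

text \<open>Finite words over {0,1} are bool lists (False = 0, True = 1);
  infinite words are functions nat \<Rightarrow> bool.\<close>

definition inF :: "bool list \<Rightarrow> bool" where
  "inF w \<longleftrightarrow> w \<noteq> [] \<and> hd w = False \<and> last w = False"

definition Ycnt :: "bool list \<Rightarrow> nat" where
  "Ycnt w = count_list w True"

definition Zcnt :: "bool list \<Rightarrow> nat" where
  "Zcnt w = count_list w False"

definition rho :: "bool list \<Rightarrow> real" where
  "rho w = real (Ycnt w) / real (Zcnt w)"

definition fin_build :: "bool list \<Rightarrow> nat list \<Rightarrow> bool list" where
  "fin_build v as = v @ concat (map (\<lambda>k. replicate k True @ v) as)"

text \<open>u is built from v: u = v 1^{a_1} v ... 1^{a_{q-1}} v with q \<ge> 2\<close>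
definition built_from :: "bool list \<Rightarrow> bool list \<Rightarrow> bool" where
  "built_from u v \<longleftrightarrow> (\<exists>as. length as \<ge> 1 \<and> u = fin_build v as)"

definition L :: "bool list \<Rightarrow> bool list \<Rightarrow> real" where
  "L \<alpha> \<beta> = real (sum_list (SOME as. length as \<ge> 1 \<and> \<alpha> = fin_build \<beta> as))
              / real (length \<alpha>)"

definition extends :: "(nat \<Rightarrow> bool) \<Rightarrow> bool list \<Rightarrow> bool" where
  "extends V w \<longleftrightarrow> (\<forall>i<length w. V i = w ! i)"

definition gen_seq_from :: "bool list \<Rightarrow> (nat \<Rightarrow> bool list) \<Rightarrow> bool" where
  "gen_seq_from w vs \<longleftrightarrow> vs 0 = w \<and> (\<forall>n. built_from (vs (Suc n)) (vs n))"

definition gen_seq_of_from :: "(nat \<Rightarrow> bool) \<Rightarrow> bool list \<Rightarrow> (nat \<Rightarrow> bool list) \<Rightarrow> bool" where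
  "gen_seq_of_from V w vs \<longleftrightarrow> gen_seq_from w vs \<and> (\<forall>n. extends V (vs n))"

definition gen_seq_of :: "(nat \<Rightarrow> bool) \<Rightarrow> (nat \<Rightarrow> bool list) \<Rightarrow> bool" where
  "gen_seq_of V vs \<longleftrightarrow> gen_seq_of_from V [False] vs"

definition aperiodic :: "(nat \<Rightarrow> bool) \<Rightarrow> bool" where
  "aperiodic V \<longleftrightarrow> \<not> (\<exists>p>0. \<exists>N. \<forall>i\<ge>N. V (i + p) = V i)"

definition inR :: "(nat \<Rightarrow> bool) \<Rightarrow> bool" where
  "inR V \<longleftrightarrow> aperiodic V \<and> (\<exists>vs. gen_seq_of V vs)"

text \<open>rho_V = lim rho_{v_n} in [0,\<infinity>] (the paper shows independence of the sequence)\<close>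
definition rhoV :: "(nat \<Rightarrow> bool) \<Rightarrow> ereal" where
  "rhoV V = lim (\<lambda>n. ereal (rho ((SOME vs. gen_seq_of V vs) n)))"

definition inRstar :: "(nat \<Rightarrow> bool) \<Rightarrow> bool" where
  "inRstar V \<longleftrightarrow> inR V \<and> rhoV V < \<infinity>"

definition inf_built_from :: "(nat \<Rightarrow> bool) \<Rightarrow> bool list \<Rightarrow> bool" where
  "inf_built_from V v \<longleftrightarrow> (\<exists>a::nat \<Rightarrow> nat. \<forall>n. extends V (fin_build v (map a [0..<n])))"

definition LV :: "(nat \<Rightarrow> bool) \<Rightarrow> bool list \<Rightarrow> real" where
  "LV V v = lim (\<lambda>n. L ((SOME vs. gen_seq_of_from V v vs) n) v)"

end

theory Submission
  imports Defs
begin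

lemma count_rep: "count_list (replicate k a) x = (if a = x then k else 0)"
  by (induction k) auto

lemma Y_fb: "Ycnt (fin_build v as) = (length as + 1) * Ycnt v + sum_list as"
  unfolding Ycnt_def fin_build_def
  by (induction as) (auto simp: count_rep)

lemma Z_fb: "Zcnt (fin_build v as) = (length as + 1) * Zcnt v"
  unfolding Zcnt_def fin_build_def
  by (induction as) (auto simp: count_rep)

lemma YZ_len: "Ycnt w + Zcnt w = length w"
  unfolding Ycnt_def Zcnt_def by (induction w) auto

lemma fb_snoc: "fin_build v (as @ [a]) = fin_build v as @ replicate a True @ v"
  unfolding fin_build_def by simp

lemma fb_join: "fin_build v as @ replicate b True @ fin_build v cs = fin_build v (as @ b # cs)"
  unfolding fin_build_def by simp

lemma fb_Cons: "fin_build w (b # bs) = w @ replicate b True @ fin_build w bs"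
  unfolding fin_build_def by simp

lemma fb_fb: "fin_build (fin_build v as) bs = fin_build v (as @ concat (map (\<lambda>b. b # as) bs))"
proof (induction bs)
  case Nil then show ?case by (simp add: fin_build_def)
next
  case (Cons b bs)
  have "fin_build (fin_build v as) (b # bs) = fin_build v as @ replicate b True @ fin_build v (as @ concat (map (\<lambda>b. b # as) bs))"
    by (simp add: fb_Cons Cons.IH)
  also have "\<dots> = fin_build v (as @ b # as @ concat (map (\<lambda>b. b # as) bs))"
    by (simp add: fb_join)
  finally show ?case by simp
qed

lemma L_fb:
  assumes "Zcnt v > 0" "length as \<ge> 1"
  shows "L (fin_build v as) v = real (sum_list as) / real (length (fin_build v as))"
proof -
  let ?P = "\<lambda>bs. length bs \<ge> 1 \<and> fin_build v as = fin_build v bs"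
  have "?P (SOME bs. ?P bs)" by (rule someI[of ?P as]) (use assms in auto)
  then obtain bs where bs: "bs = (SOME bs. ?P bs)" "fin_build v as = fin_build v bs" by blast
  have "length bs = length as" using arg_cong[OF bs(2), of Zcnt] assms by (simp add: Z_fb)
  then have "sum_list bs = sum_list as" using arg_cong[OF bs(2), of Ycnt] by (simp add: Y_fb)
  then show ?thesis unfolding L_def using bs(1) by simp
qed

lemma L_rho:
  assumes "Zcnt v > 0" "length as \<ge> 1"
  shows "L (fin_build v as) v = (rho (fin_build v as) - rho v) / (1 + rho (fin_build v as))"
proof -
  let ?a = "fin_build v as"
  define q where "q = length as + 1"
  have Y: "real (Ycnt ?a) = q * Ycnt v + sum_list as" by (simp add: Y_fb q_def)
  have Z: "real (Zcnt ?a) = q * Zcnt v" by (simp add: Z_fb q_def)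
  have len: "real (length ?a) = q * Ycnt v + sum_list as + q * Zcnt v"
    using Y Z by (simp flip: YZ_len)
  have qp: "q > 0" by (simp add: q_def)
  have Zp: "real (Zcnt v) > 0" using assms by simp
  show ?thesis unfolding L_fb[OF assms] rho_def len Y Z
    using qp Zp by (simp add: field_simps)
qed

lemma rho_fb_ge:
  assumes "Zcnt v > 0"
  shows "rho v \<le> rho (fin_build v as)"
proof -
  define q where "q = length as + 1"
  have Y: "real (Ycnt (fin_build v as)) = q * Ycnt v + sum_list as" by (simp add: Y_fb q_def)
  have Z: "real (Zcnt (fin_build v as)) = q * Zcnt v" by (simp add: Z_fb q_def)
  have qp: "q > 0" by (simp add: q_def)
  have Zp: "real (Zcnt v) > 0" using assms by simp
  show ?thesis unfolding rho_def Y Z using qp Zp by (simp add: field_simps)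
qed

lemma rho_fb_eq:
  assumes "Zcnt v > 0" "rho (fin_build v as) = rho v"
  shows "sum_list as = 0"
proof -
  define q where "q = length as + 1"
  have Y: "real (Ycnt (fin_build v as)) = q * Ycnt v + sum_list as" by (simp add: Y_fb q_def)
  have Z: "real (Zcnt (fin_build v as)) = q * Zcnt v" by (simp add: Z_fb q_def)
  have qp: "q > 0" by (simp add: q_def)
  have Zp: "real (Zcnt v) > 0" using assms by simp
  from assms(2) have "(q * Ycnt v + sum_list as) / (q * Zcnt v) = Ycnt v / Zcnt v"
    unfolding rho_def Y Z .
  then have "real (sum_list as) = 0" using qp Zp by (simp add: field_simps)
  then show ?thesis by simp
qed

lemma fb_Nil[simp]: "fin_build w [] = w" by (simp add: fin_build_def)

lemma chain:
  assumes "gen_seq_from v ws"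
  shows "\<exists>as. ws (m + k) = fin_build (ws m) as \<and> (k > 0 \<longrightarrow> length as \<ge> 1)"
proof (induction k)
  case 0 show ?case by (rule exI[of _ "[]"]) simp
next
  case (Suc k)
  then obtain as where as: "ws (m + k) = fin_build (ws m) as" by blast
  from assms have "built_from (ws (Suc (m + k))) (ws (m + k))" by (simp add: gen_seq_from_def)
  then obtain bs where bs: "length bs \<ge> 1" "ws (Suc (m+k)) = fin_build (ws (m+k)) bs"
    unfolding built_from_def by blast
  show ?case
    by (rule exI[of _ "as @ concat (map (\<lambda>b. b # as) bs)"])
       (use bs as in \<open>auto simp: fb_fb length_concat\<close>, cases bs, auto)
qed

lemma Z_grow:
  assumes "gen_seq_from v ws" "Zcnt v > 0"
  shows "Zcnt (ws n) \<ge> n + 1"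
proof (induction n)
  case 0 then show ?case using assms by (simp add: gen_seq_from_def)
next
  case (Suc n)
  from assms have "built_from (ws (Suc n)) (ws n)" by (simp add: gen_seq_from_def)
  then obtain bs where bs: "length bs \<ge> 1" "ws (Suc n) = fin_build (ws n) bs"
    unfolding built_from_def by blast
  have "Zcnt (ws (Suc n)) = (length bs + 1) * Zcnt (ws n)" by (simp add: bs Z_fb)
  also have "\<dots> \<ge> 2 * Zcnt (ws n)" using bs(1) by simp
  finally show ?case using Suc by simp
qed

lemma Z_app: "Zcnt (a @ b) = Zcnt a + Zcnt b" by (simp add: Zcnt_def)
lemma Y_app: "Ycnt (a @ b) = Ycnt a + Ycnt b" by (simp add: Ycnt_def)

lemma count_take_le: "count_list (take j xs) a \<le> count_list xs a"
  by (metis append_take_drop_id count_list_append le_add1)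

lemma prefix_bound:
  "Ycnt x * Zcnt (take k (fin_build x as)) \<le> Ycnt (take k (fin_build x as)) * Zcnt x + Ycnt x * Zcnt x"
proof (induction as arbitrary: k rule: rev_induct)
  case Nil
  have "Zcnt (take k x) \<le> Zcnt x" unfolding Zcnt_def by (rule count_take_le)
  then show ?case by (simp add: mult_le_mono2 trans_le_add2)
next
  case (snoc a as)
  let ?fb = "fin_build x as" and ?r = "replicate a True @ x"
  show ?case
  proof (cases "k \<le> length ?fb")
    case True
    then show ?thesis using snoc.IH[of k] by (simp add: fb_snoc)
  next
    case False
    then have P: "take k (fin_build x (as @ [a])) = ?fb @ take (k - length ?fb) ?r"
      by (simp add: fb_snoc take_append)
    have Zr: "Zcnt (take (k - length ?fb) ?r) \<le> Zcnt x"
      using count_take_le[of "k - length ?fb" ?r False] by (simp add: Zcnt_def count_rep)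
    have ZP: "Zcnt (take k (fin_build x (as @ [a]))) \<le> (length as + 2) * Zcnt x"
      using Zr unfolding P Z_app by (simp add: Z_fb)
    have YP: "Ycnt (take k (fin_build x (as @ [a]))) \<ge> (length as + 1) * Ycnt x"
      unfolding P Y_app by (simp add: Y_fb)
    have "Ycnt x * Zcnt (take k (fin_build x (as @ [a]))) \<le> Ycnt x * ((length as + 2) * Zcnt x)"
      using ZP by (rule mult_le_mono2)
    also have "\<dots> = (length as + 1) * Ycnt x * Zcnt x + Ycnt x * Zcnt x" by (simp add: algebra_simps)
    also have "\<dots> \<le> Ycnt (take k (fin_build x (as @ [a]))) * Zcnt x + Ycnt x * Zcnt x"
      using YP by (simp add: mult_le_mono1)
    finally show ?thesis .
  qed
qed

lemma fb_zero: "sum_list as = 0 \<Longrightarrow> fin_build w as = concat (replicate (length as + 1) w)"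
  unfolding fin_build_def by (induction as) auto

lemma concat_rep_mult: "concat (replicate a (concat (replicate b v))) = concat (replicate (a * b) v)"
  by (induction a) (auto simp: replicate_add)

lemma nth_concat_rep: "i < k * length v \<Longrightarrow> concat (replicate k v) ! i = v ! (i mod length v)"
proof (induction k arbitrary: i)
  case 0 then show ?case by simp
next
  case (Suc k)
  show ?case
  proof (cases "i < length v")
    case True then show ?thesis by (simp add: nth_append)
  next
    case False
    then have "i - length v < k * length v" using Suc.prems by simp
    then show ?thesis using False Suc.IH[of "i - length v"] by (simp add: nth_append mod_if)
  qed
qed

lemma rho_nonneg: "rho w \<ge> 0" by (simp add: rho_def)

lemma Zpos_seq: "gen_seq_from v ws \<Longrightarrow> Zcnt v > 0 \<Longrightarrow> Zcnt (ws n) > 0"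
  using Z_grow[of v ws n] by simp

lemma rho_inc:
  assumes "gen_seq_from v ws" "Zcnt v > 0"
  shows "incseq (\<lambda>n. rho (ws n))"
proof (rule incseq_SucI)
  fix n
  obtain as where "ws (n + 1) = fin_build (ws n) as" using chain[OF assms(1), of n 1] by blast
  then show "rho (ws n) \<le> rho (ws (Suc n))"
    using rho_fb_ge[OF Zpos_seq[OF assms]] by simp
qed

lemma ext_take:
  assumes "extends V a" "extends V b" "length a \<le> length b"
  shows "a = take (length a) b"
  using assms by (intro nth_equalityI) (auto simp: extends_def)

lemma ZtoInf:
  assumes "gen_seq_from v ws" "Zcnt v > 0"
  shows "filterlim (\<lambda>n. real (Zcnt (ws n))) at_infinity sequentially"
proof -
  have "filterlim (\<lambda>n. real (Zcnt (ws n))) at_top sequentially"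
  proof (rule filterlim_at_top_mono[OF filterlim_real_sequentially])
    show "\<forall>\<^sub>F n in sequentially. real n \<le> real (Zcnt (ws n))"
      using Z_grow[OF assms] by (auto intro!: always_eventually simp: Suc_le_eq less_imp_le)
  qed
  then show ?thesis by (rule filterlim_at_top_imp_at_infinity)
qed

lemma indep:
  assumes x: "gen_seq_of_from V x0 xs" "Zcnt x0 > 0"
    and y: "gen_seq_of_from V y0 ys" "Zcnt y0 > 0"
  shows "ereal (rho (xs n)) \<le> (SUP m. ereal (rho (ys m)))"
proof -
  have gx: "gen_seq_from x0 xs" and gy: "gen_seq_from y0 ys"
    using x y by (auto simp: gen_seq_of_from_def)
  have Zx: "Zcnt (xs n) > 0" by (rule Zpos_seq[OF gx x(2)])
  define c where "c = rho (xs n) * Zcnt (xs n)"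
  have bound: "rho (xs n) - c / Zcnt (ys m) \<le> rho (ys m)" for m
  proof -
    define n' where "n' = n + length (ys m)"
    have "Zcnt (xs n') \<ge> n' + 1" by (rule Z_grow[OF gx x(2)])
    then have "length (xs n') \<ge> length (ys m)" using YZ_len[of "xs n'"] unfolding n'_def by linarith
    then have ym: "ys m = take (length (ys m)) (xs n')"
      using ext_take[of V "ys m" "xs n'"] x(1) y(1) by (auto simp: gen_seq_of_from_def)
    obtain as where as: "xs n' = fin_build (xs n) as" using chain[OF gx, of n "length (ys m)"]
      unfolding n'_def by blast
    have "Ycnt (xs n) * Zcnt (ys m) \<le> Ycnt (ys m) * Zcnt (xs n) + Ycnt (xs n) * Zcnt (xs n)"
      using prefix_bound[of "xs n" "length (ys m)" as] ym as by simp
    then have I: "real (Ycnt (xs n)) * Zcnt (ys m) \<le> real (Ycnt (ys m)) * Zcnt (xs n) + real (Ycnt (xs n)) * Zcnt (xs n)"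
      by (metis of_nat_add of_nat_le_iff of_nat_mult)
    have Zy: "real (Zcnt (ys m)) > 0" using Zpos_seq[OF gy y(2)] by simp
    have Zx': "real (Zcnt (xs n)) > 0" using Zx by simp
    have I2: "real (Ycnt (xs n)) * Zcnt (ys m) * Zcnt (ys m) \<le> (real (Ycnt (ys m)) * Zcnt (xs n) + real (Ycnt (xs n)) * Zcnt (xs n)) * Zcnt (ys m)"
      using mult_right_mono[OF I, of "real (Zcnt (ys m))"] by simp
    show ?thesis unfolding c_def rho_def using I2 Zy Zx'
      by (simp add: field_simps)
  qed
  have L1: "(\<lambda>m. ereal (rho (xs n) - c / Zcnt (ys m))) \<longlonglongrightarrow> ereal (rho (xs n))"
    unfolding lim_ereal
    using tendsto_diff[OF tendsto_const tendsto_divide_0[OF tendsto_const ZtoInf[OF gy y(2)]]]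
    by simp
  have L2: "(\<lambda>m. ereal (rho (ys m))) \<longlonglongrightarrow> (SUP m. ereal (rho (ys m)))"
    by (rule LIMSEQ_SUP) (use rho_inc[OF gy y(2)] in \<open>auto simp: incseq_def\<close>)
  show ?thesis by (rule LIMSEQ_le[OF L1 L2]) (use bound in auto)
qed

lemma indep_eq:
  assumes x: "gen_seq_of_from V x0 xs" "Zcnt x0 > 0"
    and y: "gen_seq_of_from V y0 ys" "Zcnt y0 > 0"
  shows "(SUP n. ereal (rho (xs n))) = (SUP m. ereal (rho (ys m)))"
  by (rule antisym; rule SUP_least) (use indep[OF x y] indep[OF y x] in auto)

definition ell :: "ereal \<Rightarrow> bool list \<Rightarrow> real" where
  "ell R v = (if R = \<infinity> then 1 else (real_of_ereal R - rho v) / (1 + real_of_ereal R))"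

lemma conv:
  assumes w: "gen_seq_of_from V v ws" "Zcnt v > 0"
    and u: "gen_seq_of_from V u0 us" "Zcnt u0 > 0"
  shows "(\<lambda>n. L (ws n) v) \<longlonglongrightarrow> ell (SUP m. ereal (rho (us m))) v"
proof -
  define R where "R = (SUP m. ereal (rho (us m)))"
  have gw: "gen_seq_from v ws" using w by (simp add: gen_seq_of_from_def)
  have RR: "R = (SUP m. ereal (rho (ws m)))" unfolding R_def by (rule indep_eq[OF u w])
  have lim: "(\<lambda>n. ereal (rho (ws n))) \<longlonglongrightarrow> R"
    unfolding RR by (rule LIMSEQ_SUP) (use rho_inc[OF gw w(2)] in \<open>auto simp: incseq_def\<close>)
  have eqL: "\<forall>\<^sub>F n in sequentially. (rho (ws n) - rho v) / (1 + rho (ws n)) = L (ws n) v"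
  proof (rule eventually_sequentiallyI[of 1])
    fix n :: nat assume "n \<ge> 1"
    then obtain as where as: "ws (0 + n) = fin_build (ws 0) as" "length as \<ge> 1"
      using chain[OF gw, of 0 n] by auto
    have "ws 0 = v" using gw by (simp add: gen_seq_from_def)
    then show "(rho (ws n) - rho v) / (1 + rho (ws n)) = L (ws n) v"
      using L_rho[OF w(2) as(2)] as(1) by simp
  qed
  have R0: "R \<ge> 0"
    unfolding RR by (rule SUP_upper2[of 0]) (auto simp: rho_nonneg)
  show ?thesis
  proof (cases "R = \<infinity>")
    case True
    then have "filterlim (\<lambda>n. rho (ws n)) at_top sequentially"
      using lim tendsto_PInfty_eq_at_top by auto
    then have inf: "filterlim (\<lambda>n. 1 + rho (ws n)) at_infinity sequentially"
      by (intro filterlim_at_top_imp_at_infinity filterlim_tendsto_add_at_top[OF tendsto_const])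
    have "(\<lambda>n. 1 - (1 + rho v) / (1 + rho (ws n))) \<longlonglongrightarrow> 1 - 0"
      by (rule tendsto_diff[OF tendsto_const tendsto_divide_0[OF tendsto_const inf]])
    moreover have "1 - (1 + rho v) / (1 + rho (ws n)) = (rho (ws n) - rho v) / (1 + rho (ws n))" for n
      using rho_nonneg[of "ws n"] by (simp add: field_simps)
    ultimately have "(\<lambda>n. (rho (ws n) - rho v) / (1 + rho (ws n))) \<longlonglongrightarrow> 1" by simp
    then show ?thesis using tendsto_cong[OF eqL] True unfolding ell_def R_def by auto
  next
    case False
    then obtain r where r: "R = ereal r" using R0 by (cases R) auto
    then have "(\<lambda>n. rho (ws n)) \<longlonglongrightarrow> r" using lim by simp
    moreover have "r \<ge> 0" using R0 r by simp
    ultimately have "(\<lambda>n. (rho (ws n) - rho v) / (1 + rho (ws n))) \<longlonglongrightarrow> (r - rho v) / (1 + r)"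
      by (intro tendsto_intros) auto
    then show ?thesis using tendsto_cong[OF eqL] r unfolding ell_def R_def by auto
  qed
qed

lemma LV_val:
  assumes w: "gen_seq_of_from V v ws" "Zcnt v > 0"
    and u: "gen_seq_of_from V u0 us" "Zcnt u0 > 0"
  shows "LV V v = ell (SUP m. ereal (rho (us m))) v"
proof -
  let ?W = "SOME ws. gen_seq_of_from V v ws"
  have "gen_seq_of_from V v ?W" by (rule someI[of "gen_seq_of_from V v", OF w(1)])
  from conv[OF this w(2) u] show ?thesis unfolding LV_def by (rule limI)
qed

lemma const_rho_rep:
  assumes "gen_seq_from v ws" "Zcnt v > 0" "\<forall>n. rho (ws n) = rho v"
  shows "\<exists>k. ws n = concat (replicate k v)"
proof (induction n)
  case 0 show ?case using assms(1) by (intro exI[of _ 1]) (simp add: gen_seq_from_def)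
next
  case (Suc n)
  then obtain k where k: "ws n = concat (replicate k v)" by blast
  from assms(1) have "built_from (ws (Suc n)) (ws n)" by (simp add: gen_seq_from_def)
  then obtain bs where bs: "ws (Suc n) = fin_build (ws n) bs"
    unfolding built_from_def by blast
  have "sum_list bs = 0"
    by (rule rho_fb_eq[OF Zpos_seq[OF assms(1,2), of n]]) (use bs assms(3) in metis)
  then have "ws (Suc n) = concat (replicate ((length bs + 1) * k) v)"
    using bs k fb_zero[of bs "ws n"] concat_rep_mult[of "length bs + 1" k v] by simp
  then show ?case by blast
qed

lemma periodic_contra:
  assumes "gen_seq_of_from V v ws" "Zcnt v > 0" "\<forall>n. rho (ws n) = rho v"
  shows "\<not> aperiodic V"
proof -
  have g: "gen_seq_from v ws" using assms(1) by (simp add: gen_seq_of_from_def)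
  have lv: "length v > 0" using assms(2) by (cases v) (auto simp: Zcnt_def)
  have Vi: "V i = v ! (i mod length v)" for i
  proof -
    obtain k where k: "ws i = concat (replicate k v)" using const_rho_rep[OF g assms(2,3)] by blast
    have "Zcnt (ws i) \<ge> i + 1" by (rule Z_grow[OF g assms(2)])
    then have "length (ws i) > i" using YZ_len[of "ws i"] by linarith
    then have il: "i < k * length v" using k by (simp add: length_concat sum_list_replicate)
    have "V i = ws i ! i" using assms(1) \<open>length (ws i) > i\<close>
      by (auto simp: gen_seq_of_from_def extends_def)
    then show ?thesis using nth_concat_rep[OF il] k by simp
  qed
  have "\<forall>i\<ge>0. V (i + length v) = V i" using Vi by simp
  then show ?thesis unfolding aperiodic_def using lv by blast
qed

lemma Zpos_F: "inF v \<Longrightarrow> Zcnt v > 0"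
  by (cases v) (auto simp: inF_def Zcnt_def)

theorem mainTheorem8:
  fixes V :: "nat \<Rightarrow> bool" and v :: "bool list" and vs :: "nat \<Rightarrow> bool list"
  assumes "inR V" and "inF v" and "inf_built_from V v"
    and "gen_seq_of_from V v vs"
  shows "(\<forall>n\<ge>1. L (vs n) v = (rho (vs n) - rho v) / (1 + rho (vs n)))
    \<and> (\<forall>ws. gen_seq_of_from V v ws \<longrightarrow> (\<lambda>n. L (ws n) v) \<longlonglongrightarrow> LV V v)
    \<and> (inRstar V \<longrightarrow>
         LV V v = (real_of_ereal (rhoV V) - rho v) / (1 + real_of_ereal (rhoV V))
       \<and> LV V v = 1 - (1 + rho v) / (1 + real_of_ereal (rhoV V)))
    \<and> (\<not> inRstar V \<longrightarrow> LV V v = 1)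
    \<and> (inRstar V \<longrightarrow> 0 < LV V v \<and> LV V v < 1
         \<and> (\<forall>us. gen_seq_of V us \<longrightarrow>
              decseq (\<lambda>n. LV V (us n)) \<and> (\<lambda>n. LV V (us n)) \<longlonglongrightarrow> 0))"
proof -
  have Zv: "Zcnt v > 0" by (rule Zpos_F[OF assms(2)])
  have gv: "gen_seq_from v vs" using assms(4) by (simp add: gen_seq_of_from_def)
  define u where "u = (SOME us. gen_seq_of V us)"
  have "\<exists>us. gen_seq_of V us" using assms(1) by (simp add: inR_def)
  then have gu: "gen_seq_of V u" unfolding u_def by (rule someI_ex)
  then have gu': "gen_seq_of_from V [False] u" by (simp add: gen_seq_of_def)
  have Zu0: "Zcnt [False] > 0" by (simp add: Zcnt_def)
  define R where "R = (SUP m. ereal (rho (u m)))"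
  have rhoV: "rhoV V = R"
  proof -
    have "(\<lambda>n. ereal (rho (u n))) \<longlonglongrightarrow> R" unfolding R_def
      by (rule LIMSEQ_SUP) (use rho_inc[of "[False]" u] gu' Zu0 in \<open>auto simp: incseq_def gen_seq_of_from_def\<close>)
    then show ?thesis unfolding rhoV_def u_def[symmetric] by (rule limI)
  qed
  have LVv: "LV V v = ell R v" unfolding R_def by (rule LV_val[OF assms(4) Zv gu' Zu0])
  have convv: "\<And>ws. gen_seq_of_from V v ws \<Longrightarrow> (\<lambda>n. L (ws n) v) \<longlonglongrightarrow> LV V v"
    unfolding LVv R_def using conv[OF _ Zv gu' Zu0] by blast
  have RR: "R = (SUP m. ereal (rho (vs m)))" unfolding R_def by (rule indep_eq[OF gu' Zu0 assms(4) Zv])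
  have R0: "R \<ge> 0" unfolding RR by (rule SUP_upper2[of 0]) (auto simp: rho_nonneg)
  have P1: "\<forall>n\<ge>1. L (vs n) v = (rho (vs n) - rho v) / (1 + rho (vs n))"
  proof (intro allI impI)
    fix n :: nat assume "n \<ge> 1"
    then obtain as where as: "vs (0 + n) = fin_build (vs 0) as" "length as \<ge> 1"
      using chain[OF gv, of 0 n] by auto
    have "vs 0 = v" using gv by (simp add: gen_seq_from_def)
    then show "L (vs n) v = (rho (vs n) - rho v) / (1 + rho (vs n))"
      using L_rho[OF Zv as(2)] as(1) by simp
  qed
  have P3: "inRstar V \<longrightarrow> 0 < LV V v \<and> LV V v < 1
         \<and> (\<forall>us. gen_seq_of V us \<longrightarrow>
              decseq (\<lambda>n. LV V (us n)) \<and> (\<lambda>n. LV V (us n)) \<longlonglongrightarrow> 0)"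
  proof
    assume "inRstar V"
    then have "R \<noteq> \<infinity>" using rhoV by (simp add: inRstar_def)
    then obtain r where r: "R = ereal r" using R0 by (cases R) auto
    have r0: "r \<ge> 0" using R0 r by simp
    have LVr: "LV V v = (r - rho v) / (1 + r)" using LVv r by (simp add: ell_def)
    have le: "rho (vs n) \<le> r" for n
    proof -
      have "ereal (rho (vs n)) \<le> R" unfolding RR by (rule SUP_upper) simp
      then show ?thesis using r by simp
    qed
    have gt: "rho v < r"
    proof (rule ccontr)
      assume "\<not> rho v < r"
      have "rho (vs n) = rho v" for n
      proof -
        have "rho (vs 0) \<le> rho (vs n)" using rho_inc[OF gv Zv] by (simp add: incseq_def)
        moreover have "vs 0 = v" using gv by (simp add: gen_seq_from_def)
        ultimately show ?thesis using le[of n] \<open>\<not> rho v < r\<close> by simp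
      qed
      then have "\<not> aperiodic V" using periodic_contra[OF assms(4) Zv] by blast
      then show False using assms(1) by (simp add: inR_def)
    qed
    have A: "0 < LV V v" unfolding LVr using gt r0 by simp
    have B: "LV V v < 1" unfolding LVr using r0 rho_nonneg[of v] by (simp add: field_simps)
    have C: "decseq (\<lambda>n. LV V (us n)) \<and> (\<lambda>n. LV V (us n)) \<longlonglongrightarrow> 0" if us: "gen_seq_of V us" for us
    proof -
      have us': "gen_seq_of_from V [False] us" using us by (simp add: gen_seq_of_def)
      have gus: "gen_seq_from [False] us" using us' by (simp add: gen_seq_of_from_def)
      have Zn: "Zcnt (us n) > 0" for n by (rule Zpos_seq[OF gus Zu0])
      have sh: "gen_seq_of_from V (us n) (\<lambda>k. us (n + k))" for n
        using us' by (simp add: gen_seq_of_from_def gen_seq_from_def)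
      have val: "LV V (us n) = (r - rho (us n)) / (1 + r)" for n
        using LV_val[OF sh Zn gu' Zu0] r unfolding R_def[symmetric] by (simp add: ell_def)
      have inc: "incseq (\<lambda>n. rho (us n))" by (rule rho_inc[OF gus Zu0])
      have dec: "decseq (\<lambda>n. LV V (us n))"
        unfolding decseq_def val using inc r0 by (auto simp: incseq_def divide_right_mono)
      have "(\<lambda>n. ereal (rho (us n))) \<longlonglongrightarrow> R" unfolding indep_eq[OF gu' Zu0 us' Zu0, folded R_def]
        by (rule LIMSEQ_SUP) (use inc in \<open>auto simp: incseq_def\<close>)
      then have "(\<lambda>n. rho (us n)) \<longlonglongrightarrow> r" using r by simp
      then have "(\<lambda>n. (r - rho (us n)) / (1 + r)) \<longlonglongrightarrow> (r - r) / (1 + r)"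
        using r0 by (intro tendsto_intros) auto
      then show ?thesis using dec unfolding val by simp
    qed
    show "0 < LV V v \<and> LV V v < 1
         \<and> (\<forall>us. gen_seq_of V us \<longrightarrow>
              decseq (\<lambda>n. LV V (us n)) \<and> (\<lambda>n. LV V (us n)) \<longlonglongrightarrow> 0)"
      using A B C by blast
  qed
  have P2: "inRstar V \<longrightarrow>
         LV V v = (real_of_ereal (rhoV V) - rho v) / (1 + real_of_ereal (rhoV V))
       \<and> LV V v = 1 - (1 + rho v) / (1 + real_of_ereal (rhoV V))"
  proof
    assume "inRstar V"
    then have "R \<noteq> \<infinity>" using rhoV by (simp add: inRstar_def)
    then obtain r where r: "R = ereal r" using R0 by (cases R) auto
    have r0: "r \<ge> 0" using R0 r by simp
    have LVr: "LV V v = (r - rho v) / (1 + r)" using LVv r by (simp add: ell_def)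
    show "LV V v = (real_of_ereal (rhoV V) - rho v) / (1 + real_of_ereal (rhoV V))
       \<and> LV V v = 1 - (1 + rho v) / (1 + real_of_ereal (rhoV V))"
      unfolding rhoV r LVr using r0 by (simp add: field_simps)
  qed
  have P4: "\<not> inRstar V \<longrightarrow> LV V v = 1"
  proof
    assume "\<not> inRstar V"
    then have "R = \<infinity>" using rhoV assms(1) by (simp add: inRstar_def)
    then show "LV V v = 1" using LVv by (simp add: ell_def)
  qed
  show ?thesis using P1 convv P2 P3 P4 by blast
qed

end
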